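(* Let $d>1$ and $1\le d_1\le d$ be integers, let $C>0$, and let $B>5+\log_2 C$. For an integer $k\ge1$ put $n=2^k$, $s_j=n/2^{j-1}$, and for $1\le i\le k$ put $$j_0=j_0(i)=\tfrac1d\log n+\big(1-\tfrac{d_1}{d}\big)(i-1)-\big(1+\tfrac1d\big)\log\log n-B,$$ and for a constant $A>0$ and $i-1\le j\le k$ put $$\Delta_j^i=A\,\frac{1}{(1+|j-j_0|)^2}\cdot\frac{n^{1/2-1/(2d)}}{2^{(1/2-d_1/(2d))(i-1)}}\cdot\log^{1/2+1/(2d)}n .$$ Then there is $A_0>0$ depending only on $d$, $C$ and $B$ such that for every $A\ge A_0$ and every $k\ge1$, $$\sum_{i=1}^{k}\sum_{j=i-1}^{k}C\cdot\frac{j^d\,2^{jd}}{2^{(d-d_1)(i-1)}}\exp\!\Big(-\frac{(\Delta_j^i)^2}{16\,s_j}\Big)\le\frac{n}{16}.$$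
   Context: $\log$ denotes the base-2 logarithm and $\exp$ the natural exponential. *)

theory Defs
  imports Complex_Main
begin

(* log denotes base-2 logarithm: log 2 x *)

definition j0 :: "nat \<Rightarrow> nat \<Rightarrow> real \<Rightarrow> nat \<Rightarrow> nat \<Rightarrow> real" where
  "j0 d d1 B k i =
     (let n = (2::real) ^ k in
      (1 / real d) * log 2 n + (1 - real d1 / real d) * (real i - 1)
      - (1 + 1 / real d) * log 2 (log 2 n) - B)"

definition Delta :: "nat \<Rightarrow> nat \<Rightarrow> real \<Rightarrow> real \<Rightarrow> nat \<Rightarrow> nat \<Rightarrow> nat \<Rightarrow> real" where
  "Delta d d1 B A k i j =
     (let n = (2::real) ^ k in
      A * (1 / (1 + \<bar>real j - j0 d d1 B k i\<bar>)^2)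
        * (n powr (1/2 - 1 / (2 * real d)) / 2 powr ((1/2 - real d1 / (2 * real d)) * (real i - 1)))
        * (log 2 n) powr (1/2 + 1 / (2 * real d)))"

definition s :: "nat \<Rightarrow> nat \<Rightarrow> real" where
  "s k j = (2::real) ^ k / 2 powr (real j - 1)"

end

theory Submission
  imports Defs
begin


lemma exp_nat_half: "exp (- (real n * ln 2)) = (1/2::real)^n"
  by (simp add: exp_minus exp_of_nat_mult power_one_over inverse_eq_divide)

lemma geo_inj:
  fixes f :: "nat \<Rightarrow> real" and \<phi> :: "nat \<Rightarrow> nat"
  assumes "finite J" "inj_on \<phi> J" "\<And>j. j \<in> J \<Longrightarrow> f j \<le> (1/2)^(\<phi> j)"
  shows "sum f J \<le> 2"
proof -
  have "sum f J \<le> sum (\<lambda>j. (1/2::real)^(\<phi> j)) J" by (rule sum_mono) (use assms in auto)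
  also have "\<dots> = sum (\<lambda>l. (1/2::real)^l) (\<phi> ` J)" using assms(2) by (simp add: sum.reindex)
  also have "\<dots> \<le> (\<Sum>l. (1/2::real)^l)"
    by (rule sum_le_suminf) (use assms(1) in auto)
  also have "\<dots> = 2" using suminf_geometric[of "1/2::real"] by simp
  finally show ?thesis .
qed

lemma geo_sum:
  fixes J :: "nat set" and x :: real
  assumes "finite J"
  shows "(\<Sum>j\<in>J. exp (- (\<bar>real j - x\<bar> * ln 2))) \<le> 4"
proof -
  let ?f = "\<lambda>j::nat. exp (- (\<bar>real j - x\<bar> * ln 2))"
  define J1 where "J1 = {j\<in>J. real j \<le> x}"
  define J2 where "J2 = {j\<in>J. \<not> real j \<le> x}"
  have fin: "finite J1" "finite J2" using assms by (auto simp: J1_def J2_def)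
  have s: "sum ?f J = sum ?f J1 + sum ?f J2"
  proof -
    have "J = J1 \<union> J2" "J1 \<inter> J2 = {}" by (auto simp: J1_def J2_def)
    thus ?thesis using sum.union_disjoint[OF fin, of ?f] by simp
  qed
  have 1: "sum ?f J1 \<le> 2"
  proof (rule geo_inj[OF fin(1), of "\<lambda>j. nat (\<lfloor>x\<rfloor> - int j)"])
    show "inj_on (\<lambda>j. nat (\<lfloor>x\<rfloor> - int j)) J1"
    proof (rule inj_onI)
      fix a b assume "a \<in> J1" "b \<in> J1" "nat (\<lfloor>x\<rfloor> - int a) = nat (\<lfloor>x\<rfloor> - int b)"
      moreover have "int a \<le> \<lfloor>x\<rfloor>" "int b \<le> \<lfloor>x\<rfloor>" using calculation(1,2)
        by (auto simp: J1_def le_floor_iff)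
      ultimately show "a = b" by linarith
    qed
  next
    fix j assume j: "j \<in> J1"
    hence le: "int j \<le> \<lfloor>x\<rfloor>" by (auto simp: J1_def le_floor_iff)
    have "?f j = exp ((real j - x) * ln 2)" using j by (auto simp: J1_def algebra_simps)
    also have "\<dots> \<le> exp ((real j - real_of_int \<lfloor>x\<rfloor>) * ln 2)"
      using of_int_floor_le[of x] by (intro exp_mono mult_right_mono) auto
    also have "\<dots> = exp (- (real (nat (\<lfloor>x\<rfloor> - int j)) * ln 2))"
      using le by (simp add: algebra_simps)
    finally show "?f j \<le> (1/2)^(nat (\<lfloor>x\<rfloor> - int j))" by (simp only: exp_nat_half)
  qed
  have J2g: "\<lfloor>x\<rfloor> + 1 \<le> int a" if "a \<in> J2" for a
  proof -
    have "x < real a" using that by (auto simp: J2_def)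
    hence "\<lfloor>x\<rfloor> < int a" by (metis floor_less_iff of_int_of_nat_eq)
    thus ?thesis by linarith
  qed
  have 2: "sum ?f J2 \<le> 2"
  proof (rule geo_inj[OF fin(2), of "\<lambda>j. nat (int j - \<lfloor>x\<rfloor> - 1)"])
    show "inj_on (\<lambda>j. nat (int j - \<lfloor>x\<rfloor> - 1)) J2"
    proof (rule inj_onI)
      fix a b assume "a \<in> J2" "b \<in> J2" "nat (int a - \<lfloor>x\<rfloor> - 1) = nat (int b - \<lfloor>x\<rfloor> - 1)"
      moreover have "int a \<ge> \<lfloor>x\<rfloor> + 1" "int b \<ge> \<lfloor>x\<rfloor> + 1" using calculation(1,2) J2g by auto
      ultimately show "a = b" by linarith
    qed
  next
    fix j assume j: "j \<in> J2"
    hence le: "int j \<ge> \<lfloor>x\<rfloor> + 1" using J2g by auto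
    have "?f j = exp (- ((real j - x) * ln 2))" using j by (auto simp: J2_def)
    also have "\<dots> \<le> exp (- ((real j - real_of_int \<lfloor>x\<rfloor> - 1) * ln 2))"
      by (intro exp_mono le_imp_neg_le mult_right_mono) (insert real_of_int_floor_add_one_gt[of x], linarith, simp)
    also have "\<dots> = exp (- (real (nat (int j - \<lfloor>x\<rfloor> - 1)) * ln 2))"
      using le by (simp add: algebra_simps)
    finally show "?f j \<le> (1/2)^(nat (int j - \<lfloor>x\<rfloor> - 1))" by (simp only: exp_nat_half)
  qed
  show ?thesis using s 1 2 by linarith
qed


lemma poly_exp5:
  fixes y :: real assumes "y \<ge> 0"
  shows "y^5 \<le> (5/ln 2)^5 * exp (y * ln 2)"
proof -
  let ?z = "y * ln 2 / 5"
  have z0: "?z \<ge> 0" using assms by simp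
  have "?z \<le> exp ?z" using exp_ge_add_one_self[of ?z] by linarith
  hence "?z^5 \<le> (exp ?z)^5" using z0 by (intro power_mono) auto
  also have "(exp ?z)^5 = exp (5 * ?z)" by (metis exp_of_nat_mult of_nat_numeral)
  also have "5 * ?z = y * ln 2" by simp
  finally have "(y * ln 2 / 5)^5 \<le> exp (y * ln 2)" .
  hence "(5/ln 2)^5 * (y * ln 2 / 5)^5 \<le> (5/ln 2)^5 * exp (y * ln 2)"
    by (intro mult_left_mono) auto
  moreover have "(5/ln 2)^5 * (y * ln 2 / 5)^5 = y^5"
    by (simp add: power_mult_distrib[symmetric])
  ultimately show ?thesis by simp
qed

lemma key:
  fixes D eps :: real
  assumes D: "D \<ge> 2" and e: "eps > 0"
  shows "\<exists>U0>0. \<forall>u\<ge>U0. \<forall>t. exp (D*t*ln 2 - u*exp(t*ln 2)/(1+\<bar>t\<bar>)^4) \<le> eps * exp (- (\<bar>t\<bar>*ln 2))"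
proof -
  define l where "l = ln (2::real)"
  have l0: "0 < l" "l < 1" unfolding l_def using ln_2_less_1 by auto
  define L where "L = \<bar>ln eps\<bar> + 1"
  define M where "M = L / l"
  have L0: "L > 0" "-L \<le> ln eps" unfolding L_def by auto
  have M0: "M > 0" "M * l = L" unfolding M_def using l0 L0 by auto
  define U1 where "U1 = L * (1+M)^4 * exp (M * l)"
  define U2 where "U2 = 2*(D+1+L)*(5/l)^5"
  have U1: "U1 > 0" unfolding U1_def using L0 M0 by auto
  have U2: "U2 > 0" unfolding U2_def using L0 D l0 by auto
  show ?thesis
  proof (intro exI[of _ "max U1 U2"] conjI allI impI)
    show "max U1 U2 > 0" using U1 by auto
    fix u t :: real assume u: "max U1 U2 \<le> u"
    define E where "E = u*exp(t*l)/(1+\<bar>t\<bar>)^4"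
    have E0: "E \<ge> 0" unfolding E_def using u U1 by auto
    have pos4: "(1+\<bar>t\<bar>)^4 > 0" by auto
    have Eeq: "E * (1+\<bar>t\<bar>)^4 = u * exp (t*l)" unfolding E_def using pos4 by simp
    have main: "D*t*l - E \<le> ln eps - \<bar>t\<bar>*l"
    proof (cases "t \<le> -M")
      case True
      hence "t \<le> 0" using M0 by auto
      have "D*t*l \<le> 2*t*l" using D \<open>t \<le> 0\<close> l0
        by (intro mult_right_mono mult_right_mono_neg) auto
      moreover have "t * l \<le> -M * l" using True l0 by (intro mult_right_mono) auto
      ultimately show ?thesis using E0 M0 L0 \<open>t \<le> 0\<close> by auto
    next
      case False
      show ?thesis
      proof (cases "t \<le> 0")
        case True
        have "D*t*l \<le> 1*t*l" using D True l0
          by (intro mult_right_mono mult_right_mono_neg) auto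
        have "exp (-M*l) \<le> exp (t*l)" using False l0 by (intro exp_mono mult_right_mono) auto
        have "(1+\<bar>t\<bar>)^4 \<le> (1+M)^4" using False True by (intro power_mono) auto
        have "L * (1+\<bar>t\<bar>)^4 \<le> L * (1+M)^4" using L0 \<open>(1+\<bar>t\<bar>)^4 \<le> (1+M)^4\<close> by auto
        also have "L * (1+M)^4 = U1 * exp (-M*l)" unfolding U1_def
          by (simp add: exp_minus field_simps)
        also have "\<dots> \<le> u * exp (t*l)" using u U1 \<open>exp (-M*l) \<le> exp (t*l)\<close>
          by (intro mult_mono) auto
        also have "\<dots> = E * (1+\<bar>t\<bar>)^4" using Eeq by simp
        finally have "L \<le> E" using pos4 by simp
        thus ?thesis using \<open>D*t*l \<le> 1*t*l\<close> L0 True by auto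
      next
        case False
        hence t0: "t \<ge> 0" by auto
        have "(1+t)^5 \<le> (5/l)^5 * exp ((1+t) * l)" using poly_exp5[of "1+t"] t0 unfolding l_def by auto
        also have "exp ((1+t) * l) = 2 * exp (t*l)" unfolding l_def
          by (simp add: distrib_right exp_add)
        finally have p: "(1+t)^5 \<le> (5/l)^5 * (2 * exp (t*l))" .
        have "(D+1+L)*(1+t)^5 \<le> (D+1+L)*((5/l)^5 * (2 * exp (t*l)))"
          using p L0 D by (intro mult_left_mono) auto
        also have "\<dots> = U2 * exp (t*l)" unfolding U2_def by simp
        also have "\<dots> \<le> u * exp (t*l)" using u by (intro mult_right_mono) auto
        also have "\<dots> = E * (1+t)^4" using Eeq t0 by simp
        also have "(D+1+L)*(1+t)^5 = ((D+1+L)*(1+t)) * (1+t)^4" by (simp add: eval_nat_numeral)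
        finally have "((D+1+L)*(1+t)) * (1+t)^4 \<le> E * (1+t)^4" by simp
        hence E1: "(D+1+L)*(1+t) \<le> E" using t0 by (simp add: mult_le_cancel_right)
        have "(D+1)*t*l \<le> (D+1)*t*1" using l0 t0 D by (intro mult_left_mono) auto
        hence "(D+1)*t*l + L \<le> (D+1+L)*(1+t)" using t0 L0 D
          by (simp add: algebra_simps) (smt (verit) mult_nonneg_nonneg)
        thus ?thesis using E1 L0 t0 by (simp add: algebra_simps)
      qed
    qed
    have "exp (D*t*l - E) \<le> exp (ln eps - \<bar>t\<bar>*l)" using main by simp
    also have "\<dots> = eps * exp (- (\<bar>t\<bar>*l))" using e by (simp add: exp_diff exp_minus divide_inverse)
    finally show "exp (D*t*ln 2 - u*exp(t*ln 2)/(1+\<bar>t\<bar>)^4) \<le> eps * exp (- (\<bar>t\<bar>*ln 2))"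
      unfolding E_def l_def .
  qed
qed


lemma log2_pow: "log 2 ((2::real)^k) = real k"
  by (simp add: log_nat_power)

lemma j0_eq:
  assumes "k \<ge> 1"
  shows "j0 d d1 B k i * ln 2 = real k / real d * ln 2 + (1 - real d1 / real d) * (real i - 1) * ln 2
           - (1 + 1/real d) * ln (real k) - B * ln 2"
  unfolding j0_def Let_def log2_pow
  by (simp add: log_def algebra_simps) (simp add: field_simps)

lemma power_term:
  fixes d d1 k i j :: nat and B C :: real
  assumes "k \<ge> 1" "d > 0" "d1 \<le> d" "j \<le> k" "C > 0"
  defines "t \<equiv> real j - j0 d d1 B k i"
  shows "C * (real j ^ d * 2 ^ (j * d)) / 2 powr (real (d - d1) * (real i - 1))
     \<le> C * exp (- (B * real d * ln 2)) * 2^k / real k * exp (real d * t * ln 2)"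
proof -
  define l where "l = ln (2::real)"
  define K where "K = real k"
  have K0: "K > 0" using assms unfolding K_def by auto
  have jl: "j0 d d1 B k i * l = K / real d * l + (1 - real d1 / real d) * (real i - 1) * l
           - (1 + 1/real d) * ln K - B * l"
    using j0_eq[OF assms(1)] unfolding K_def l_def .
  have dd: "real d \<noteq> 0" using assms by simp
  have ex: "real j * real d * l - (real d - real d1) * (real i - 1) * l
      = K*l - (real d + 1) * ln K - B * real d * l + real d * t * l"
  proof -
    have "real d * (j0 d d1 B k i * l) = K * l + (real d - real d1) * (real i - 1) * l - (real d + 1) * ln K - B * real d * l"
      unfolding jl using dd by (simp add: algebra_simps diff_divide_distrib add_divide_distrib)
    moreover have "real d * t * l = real d * real j * l - real d * (j0 d d1 B k i * l)" unfolding t_def by (simp add: algebra_simps)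
    ultimately show ?thesis by (simp add: algebra_simps)
  qed
  have p1: "(2::real) ^ (j*d) = exp (real j * real d * l)"
    unfolding l_def by (metis exp_of_nat_mult exp_ln mult.commute of_nat_mult zero_less_numeral)
  have p2: "(2::real) powr (real (d - d1) * (real i - 1)) = exp ((real d - real d1) * (real i - 1) * l)"
    unfolding powr_def l_def using assms(3) by (simp add: of_nat_diff)
  have p3: "(2::real)^k = exp (K * l)"
    unfolding l_def K_def by (metis exp_of_nat_mult exp_ln mult.commute zero_less_numeral)
  have p4: "exp (- ((real d + 1) * ln K)) = 1 / K^(d+1)"
  proof -
    have "exp (real (d+1) * ln K) = exp (ln K)^(d+1)" by (rule exp_of_nat_mult)
    hence "exp ((real d + 1) * ln K) = K^(d+1)" using K0 by (simp add: add.commute)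
    thus ?thesis by (simp add: exp_minus inverse_eq_divide)
  qed
  have LHS: "C * (real j ^ d * 2 ^ (j * d)) / 2 powr (real (d - d1) * (real i - 1))
      = C * (real j ^ d * exp (- ((real d + 1) * ln K))) * exp (K*l) * exp (- (B * real d * l)) * exp (real d * t * l)"
  proof -
    have "exp (real j * real d * l) / exp ((real d - real d1) * (real i - 1) * l)
       = exp (K*l - (real d + 1) * ln K - B * real d * l + real d * t * l)"
      by (simp only: exp_diff[symmetric] ex)
    also have "\<dots> = exp (- ((real d + 1) * ln K)) * exp (K*l) * exp (- (B * real d * l)) * exp (real d * t * l)"
      by (simp only: exp_add[symmetric] exp_diff) (simp add: exp_minus divide_inverse)
    finally have h: "exp (real j * real d * l) / exp ((real d - real d1) * (real i - 1) * l) = exp (- ((real d + 1) * ln K)) * exp (K*l) * exp (- (B * real d * l)) * exp (real d * t * l)" .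
    show ?thesis unfolding p1 p2 times_divide_eq_right[symmetric] h by (simp only: mult.assoc)
  qed
  have "real j ^ d * exp (- ((real d + 1) * ln K)) \<le> K^d * (1 / K^(d+1))"
    unfolding p4 using assms(4) K0 unfolding K_def by (intro mult_right_mono power_mono) auto
  also have "\<dots> = 1 / K" using K0 by simp
  finally have jb: "real j ^ d * exp (- ((real d + 1) * ln K)) \<le> 1 / K" .
  have "C * (real j ^ d * exp (- ((real d + 1) * ln K))) * exp (K*l) * exp (- (B * real d * l)) * exp (real d * t * l)
     \<le> C * (1/K) * exp (K*l) * exp (- (B * real d * l)) * exp (real d * t * l)"
    using jb assms(5) by (intro mult_right_mono mult_left_mono) auto
  thus ?thesis unfolding LHS p3[symmetric] unfolding K_def l_def by (simp add: mult_ac)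
qed
lemma Delta_sq:
  fixes d d1 k i j :: nat and A B :: real
  assumes "k \<ge> 1" "d > 0"
  defines "t \<equiv> real j - j0 d d1 B k i"
  shows "(Delta d d1 B A k i j)\<^sup>2 / (16 * s k j)
     = (A^2 * exp ((-B-5) * ln 2)) * exp (t * ln 2) / (1 + \<bar>t\<bar>)^4"
proof -
  define l where "l = ln (2::real)"
  define K where "K = real k"
  have K0: "K > 0" using assms unfolding K_def by auto
  have l0: "l > 0" unfolding l_def by simp
  define X where "X = K*(1/2 - 1/(2*real d))*l - (1/2 - real d1/(2*real d))*(real i - 1)*l
      + (1/2 + 1/(2*real d)) * ln K"
  have D: "Delta d d1 B A k i j = A * (1/(1+\<bar>t\<bar>)^2) * exp X"
  proof -
    have a: "((2::real)^k) powr (1/2 - 1/(2*real d)) = exp (K*(1/2 - 1/(2*real d))*l)"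
      unfolding powr_def K_def l_def by (simp add: ln_realpow)
    have b: "(2::real) powr ((1/2 - real d1/(2*real d))*(real i - 1)) = exp ((1/2 - real d1/(2*real d))*(real i - 1)*l)"
      unfolding powr_def l_def by simp
    have c: "K powr (1/2 + 1/(2*real d)) = exp ((1/2 + 1/(2*real d)) * ln K)"
      unfolding powr_def using K0 by simp
    show ?thesis unfolding Delta_def Let_def log2_pow t_def[symmetric] a b
      using c unfolding K_def X_def by (simp add: exp_add exp_diff)
  qed
  have S: "16 * s k j = exp (K*l - (real j - 1)*l + 4*l)"
  proof -
    have "exp (4*l) = exp l ^ 4" by (metis exp_of_nat_mult of_nat_numeral)
    hence "exp (4*l) = 16" unfolding l_def by simp
    moreover have "s k j = exp (K*l) / exp ((real j - 1)*l)"
      unfolding s_def K_def l_def powr_def by (simp add: exp_of_nat_mult)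
    ultimately show ?thesis by (simp add: exp_add exp_diff)
  qed
  have jl: "j0 d d1 B k i * l = K / real d * l + (1 - real d1 / real d) * (real i - 1) * l
           - (1 + 1/real d) * ln K - B * l"
    using j0_eq[OF assms(1)] unfolding K_def l_def .
  have ex: "2*X - (K*l - (real j - 1)*l + 4*l) = (-B-5)*l + t*l"
  proof -
    have dd: "real d \<noteq> 0" using assms(2) by simp
    have "2*X = K*l - K/real d*l - (1 - real d1/real d)*(real i - 1)*l + (1 + 1/real d)*ln K"
      unfolding X_def using dd by (simp add: algebra_simps diff_divide_distrib add_divide_distrib)
    moreover have "t*l = real j * l - j0 d d1 B k i * l" unfolding t_def by (simp add: algebra_simps)
    ultimately show ?thesis unfolding jl by (simp add: algebra_simps)
  qed
  have e1: "(Delta d d1 B A k i j)\<^sup>2 / (16 * s k j) = A^2 / (1+\<bar>t\<bar>)^4 * ((exp X)^2 / exp (K*l - (real j - 1)*l + 4*l))"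
    unfolding D S by (simp add: power_mult_distrib power_divide flip: power_mult)
  have e2: "(exp X)^2 / exp (K*l - (real j - 1)*l + 4*l) = exp ((-B-5)*l) * exp (t*l)"
  proof -
    have "(exp X)^2 = exp (2*X)" by (metis exp_of_nat_mult of_nat_numeral)
    thus ?thesis using ex by (simp add: exp_diff[symmetric] exp_add[symmetric] algebra_simps)
  qed
  show ?thesis unfolding e1 e2 l_def[symmetric] by simp
qed

theorem mainTheorem7:
  fixes d d1 :: nat and C B :: real
  assumes "d > 1" and "1 \<le> d1" and "d1 \<le> d" and "C > 0" and "B > 5 + log 2 C"
  shows "\<exists>A0 > 0. \<forall>A \<ge> A0. \<forall>k \<ge> 1.
    (\<Sum>i = 1..k. \<Sum>j = i - 1..k.
        C * (real j ^ d * 2 ^ (j * d)) / 2 powr (real (d - d1) * (real i - 1))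
          * exp (- ((Delta d d1 B A k i j)\<^sup>2 / (16 * s k j))))
    \<le> (2::real) ^ k / 16"
proof -
  define eps where "eps = exp (B * real d * ln 2) / (64 * C)"
  have eps0: "eps > 0" unfolding eps_def using assms(4) by simp
  have D2: "real d \<ge> 2" using assms(1) by simp
  obtain U0 where U0: "U0 > 0" and
    U0p: "\<And>u t. u \<ge> U0 \<Longrightarrow> exp (real d*t*ln 2 - u*exp(t*ln 2)/(1+\<bar>t\<bar>)^4) \<le> eps * exp (- (\<bar>t\<bar>*ln 2))"
    using key[OF D2 eps0] by blast
  define c where "c = exp ((-B-5) * ln (2::real))"
  have c0: "c > 0" unfolding c_def by simp
  define A0 where "A0 = sqrt (U0 / c)"
  have A00: "A0 > 0" unfolding A0_def using U0 c0 by simp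
  show ?thesis
  proof (intro exI[of _ A0] conjI allI impI)
    show "A0 > 0" by (rule A00)
    fix A :: real and k :: nat
    assume A: "A0 \<le> A" and k: "1 \<le> k"
    have "A0^2 \<le> A^2" using A A00 by (intro power_mono) auto
    moreover have "A0^2 = U0 / c" unfolding A0_def using U0 c0 by simp
    ultimately have uA: "U0 \<le> A^2 * c" using c0 by (simp add: divide_le_eq)
    have K0: "real k > 0" using k by simp
    have d0: "d > 0" using assms(1) by simp
    define G where "G = (2::real)^k / (64 * real k)"
    have termb: "C * (real j ^ d * 2 ^ (j * d)) / 2 powr (real (d - d1) * (real i - 1))
          * exp (- ((Delta d d1 B A k i j)\<^sup>2 / (16 * s k j)))
        \<le> G * exp (- (\<bar>real j - j0 d d1 B k i\<bar> * ln 2))" if j: "j \<le> k" for i j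
    proof -
      define t where "t = real j - j0 d d1 B k i"
      define Q where "Q = C * exp (- (B * real d * ln 2)) * 2^k / real k"
      have Q0: "Q \<ge> 0" unfolding Q_def using assms(4) K0 by simp
      have P: "C * (real j ^ d * 2 ^ (j * d)) / 2 powr (real (d - d1) * (real i - 1))
          \<le> Q * exp (real d * t * ln 2)"
        unfolding Q_def t_def by (rule power_term[OF k d0 assms(3) j assms(4)])
      have E: "(Delta d d1 B A k i j)\<^sup>2 / (16 * s k j) = (A^2 * c) * exp (t * ln 2) / (1 + \<bar>t\<bar>)^4"
        unfolding c_def t_def by (rule Delta_sq[OF k d0])
      have "C * (real j ^ d * 2 ^ (j * d)) / 2 powr (real (d - d1) * (real i - 1))
          * exp (- ((Delta d d1 B A k i j)\<^sup>2 / (16 * s k j)))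
          \<le> Q * exp (real d * t * ln 2) * exp (- ((A^2 * c) * exp (t * ln 2) / (1 + \<bar>t\<bar>)^4))"
        unfolding E using P by (intro mult_right_mono) auto
      also have "\<dots> = Q * exp (real d*t*ln 2 - (A^2 * c)*exp(t*ln 2)/(1+\<bar>t\<bar>)^4)"
        by (simp add: exp_diff exp_minus divide_inverse mult.assoc)
      also have "\<dots> \<le> Q * (eps * exp (- (\<bar>t\<bar>*ln 2)))"
        using U0p[OF uA] Q0 by (intro mult_left_mono) auto
      also have "\<dots> = G * exp (- (\<bar>t\<bar>*ln 2))"
        unfolding Q_def eps_def G_def using assms(4) K0
        by (simp add: exp_minus field_simps)
      finally show ?thesis unfolding t_def .
    qed
    have "(\<Sum>i = 1..k. \<Sum>j = i - 1..k.
        C * (real j ^ d * 2 ^ (j * d)) / 2 powr (real (d - d1) * (real i - 1))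
          * exp (- ((Delta d d1 B A k i j)\<^sup>2 / (16 * s k j))))
       \<le> (\<Sum>i = 1..k. \<Sum>j = i - 1..k. G * exp (- (\<bar>real j - j0 d d1 B k i\<bar> * ln 2)))"
      by (intro sum_mono termb) auto
    also have "\<dots> \<le> (\<Sum>i = 1..k. G * 4)"
    proof (intro sum_mono)
      fix i assume "i \<in> {1..k}"
      have G0: "G \<ge> 0" unfolding G_def by simp
      have "(\<Sum>j = i - 1..k. G * exp (- (\<bar>real j - j0 d d1 B k i\<bar> * ln 2)))
          = G * (\<Sum>j = i - 1..k. exp (- (\<bar>real j - j0 d d1 B k i\<bar> * ln 2)))"
        by (simp add: sum_distrib_left)
      also have "\<dots> \<le> G * 4" using geo_sum[of "{i-1..k}" "j0 d d1 B k i"] G0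
        by (intro mult_left_mono) auto
      finally show "(\<Sum>j = i - 1..k. G * exp (- (\<bar>real j - j0 d d1 B k i\<bar> * ln 2))) \<le> G * 4" .
    qed
    also have "\<dots> = (2::real)^k / 16" unfolding G_def using K0 by simp
    finally show "(\<Sum>i = 1..k. \<Sum>j = i - 1..k.
        C * (real j ^ d * 2 ^ (j * d)) / 2 powr (real (d - d1) * (real i - 1))
          * exp (- ((Delta d d1 B A k i j)\<^sup>2 / (16 * s k j))))
       \<le> (2::real)^k / 16" .
  qed
qed

end
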